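(* Let $n\ge 1$ be an integer and $a,b,c:\{0,1,\dots,n+1\}\to\mathbb{R}$ with $a(k)\neq0$ and $c(k)\neq0$ for $k=0,\dots,n$. Let $\mathsf J(a,b,c)$ be the $(n+2)\times(n+2)$ tridiagonal matrix with rows and columns indexed by $0,\dots,n+1$, diagonal entries $\mathsf J_{kk}=b(k)$ ($k=0,\dots,n+1$), superdiagonal entries $\mathsf J_{k,k+1}=-a(k)$ and subdiagonal entries $\mathsf J_{k+1,k}=-c(k)$ ($k=0,\dots,n$), and all other entries $0$. Then $\mathsf J(a,b,c)$ is invertible if and only if $D_{\mathsf J}\neq0$, and in that case the entries of its inverse $\mathsf R=(r_{ks})_{k,s=0}^{n+1}$ are $$r_{ks}=\frac{1}{D_{\mathsf J}}\begin{cases}\Big(\prod_{j=k}^{s-1}a(j)\Big)\Phi_{\mathsf J}(k)\Psi_{\mathsf J}(s), & 0\le k\le s\le n+1,\\[1ex] \Big(\prod_{j=s}^{k-1}c(j)\Big)\Phi_{\mathsf J}(s)\Psi_{\mathsf J}(k), & 0\le s\le k\le n+1.\end{cases}$$ Moreover, $\det\mathsf R=D_{\mathsf J}^{-1}$.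
   Context: Empty products equal $1$ and empty sums equal $0$. For $m\in\mathbb{N}$ and a sequence $x$, the shift $x_m$ is $x_m(j)=x(j+m)$; $ac$ denotes the pointwise product $(ac)(j)=a(j)c(j)$. Chebyshev functions: for sequences $x,y$ set $P_{-1}(x,y)=0$, $P_0(x,y)=1$, and for $k\ge1$ $$P_k(x,y)=\sum_{m=0}^{\lfloor k/2\rfloor}(-1)^m\sum_{\alpha\in\ell_k^m}x^{\bar\alpha}y^{\alpha},$$ where: for $\alpha=(\alpha_1,\dots,\alpha_k)\in\{0,1\}^k$, $x^\alpha=\prod_{j=1}^k x(j)^{\alpha_j}$ and $|\alpha|=\sum_j\alpha_j$; $\ell_k^0=\{(0,\dots,0)\}$; for $m\ge1$, $\ell_k^m$ is the set of $\alpha\in\{0,1\}^k$ with $\alpha_k=0$, $|\alpha|=m$, and whose positions of ones $i_1<\dots<i_m$ satisfy $i_{j+1}-i_j\ge2$ for $j=1,\dots,m-1$; and $\bar\alpha\in\{0,1\}^k$ is defined by $\bar\alpha_{i_j}=\bar\alpha_{i_j+1}=0$ for $j=1,\dots,m$ and $\bar\alpha_i=1$ otherwise. Define $\Phi_{\mathsf J}(0)=1$, $\Phi_{\mathsf J}(k)=b(0)P_{k-1}(b,ac)-a(0)c(0)P_{k-2}(b_1,a_1c_1)$ for $k=1,\dots,n+1$; $\Psi_{\mathsf J}(k)=b(n+1)P_{n-k}(b_k,a_kc_k)-a(n)c(n)P_{n-k-1}(b_k,a_kc_k)$ for $k=0,\dots,n$, and $\Psi_{\mathsf J}(n+1)=1$;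 $D_{\mathsf J}=b(0)\big[b(n+1)P_n(b,ac)-a(n)c(n)P_{n-1}(b,ac)\big]-a(0)c(0)\big[b(n+1)P_{n-1}(b_1,a_1c_1)-a(n)c(n)P_{n-2}(b_1,a_1c_1)\big]$. *)

theory Defs
  imports "Jordan_Normal_Form.Determinant"
begin

definition shift :: "nat \<Rightarrow> (nat \<Rightarrow> real) \<Rightarrow> nat \<Rightarrow> real" where
  "shift m x = (\<lambda>j. x (j + m))"

definition pmul :: "(nat \<Rightarrow> real) \<Rightarrow> (nat \<Rightarrow> real) \<Rightarrow> nat \<Rightarrow> real" where
  "pmul x y = (\<lambda>j. x j * y j)"

definition bin_vecs :: "nat \<Rightarrow> (nat \<Rightarrow> nat) set" where
  "bin_vecs k = {\<alpha>. (\<forall>j. \<alpha> j \<in> {0,1}) \<and> (\<forall>j. j \<notin> {1..k} \<longrightarrow> \<alpha> j = 0)}"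

definition vpow :: "nat \<Rightarrow> (nat \<Rightarrow> real) \<Rightarrow> (nat \<Rightarrow> nat) \<Rightarrow> real" where
  "vpow k x \<alpha> = (\<Prod>j\<in>{1..k}. x j ^ \<alpha> j)"

definition ell :: "nat \<Rightarrow> nat \<Rightarrow> (nat \<Rightarrow> nat) set" where
  "ell k m = (if m = 0 then {\<lambda>_. 0}
     else {\<alpha>\<in>bin_vecs k. \<alpha> k = 0 \<and> (\<Sum>j\<in>{1..k}. \<alpha> j) = m \<and>
             (\<forall>i j. \<alpha> i = 1 \<and> \<alpha> j = 1 \<and> i < j \<longrightarrow> j - i \<ge> 2)})"

definition bar :: "nat \<Rightarrow> (nat \<Rightarrow> nat) \<Rightarrow> nat \<Rightarrow> nat" where
  "bar k \<alpha> = (\<lambda>i. if i \<in> {1..k} \<and> \<not> (\<alpha> i = 1 \<or> (i > 0 \<and> \<alpha> (i - 1) = 1)) then 1 else 0)"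

text \<open>Chebyshev functions P_k(x,y), k \<ge> -1 (value 0 for k < -1, never used).\<close>
definition chebP :: "(nat \<Rightarrow> real) \<Rightarrow> (nat \<Rightarrow> real) \<Rightarrow> int \<Rightarrow> real" where
  "chebP x y k = (if k = -1 then 0 else if k = 0 then 1 else if k < 0 then 0 else
     (\<Sum>m\<in>{0..nat k div 2}. (-1) ^ m *
        (\<Sum>\<alpha>\<in>ell (nat k) m. vpow (nat k) x (bar (nat k) \<alpha>) * vpow (nat k) y \<alpha>)))"

definition PhiJ :: "(nat \<Rightarrow> real) \<Rightarrow> (nat \<Rightarrow> real) \<Rightarrow> (nat \<Rightarrow> real) \<Rightarrow> nat \<Rightarrow> real" where
  "PhiJ a b c k = (if k = 0 then 1 else
     b 0 * chebP b (pmul a c) (int k - 1)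
     - a 0 * c 0 * chebP (shift 1 b) (shift 1 (pmul a c)) (int k - 2))"

definition PsiJ :: "nat \<Rightarrow> (nat \<Rightarrow> real) \<Rightarrow> (nat \<Rightarrow> real) \<Rightarrow> (nat \<Rightarrow> real) \<Rightarrow> nat \<Rightarrow> real" where
  "PsiJ n a b c k = (if k = n + 1 then 1 else
     b (n + 1) * chebP (shift k b) (shift k (pmul a c)) (int n - int k)
     - a n * c n * chebP (shift k b) (shift k (pmul a c)) (int n - int k - 1))"

definition DJ :: "nat \<Rightarrow> (nat \<Rightarrow> real) \<Rightarrow> (nat \<Rightarrow> real) \<Rightarrow> (nat \<Rightarrow> real) \<Rightarrow> real" where
  "DJ n a b c =
     b 0 * (b (n + 1) * chebP b (pmul a c) (int n) - a n * c n * chebP b (pmul a c) (int n - 1))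
   - a 0 * c 0 * (b (n + 1) * chebP (shift 1 b) (shift 1 (pmul a c)) (int n - 1)
                 - a n * c n * chebP (shift 1 b) (shift 1 (pmul a c)) (int n - 2))"

definition Jmat :: "nat \<Rightarrow> (nat \<Rightarrow> real) \<Rightarrow> (nat \<Rightarrow> real) \<Rightarrow> (nat \<Rightarrow> real) \<Rightarrow> real mat" where
  "Jmat n a b c = mat (n + 2) (n + 2) (\<lambda>(i, j).
     if i = j then b i else if j = i + 1 then - a i else if i = j + 1 then - c j else 0)"

definition Rmat :: "nat \<Rightarrow> (nat \<Rightarrow> real) \<Rightarrow> (nat \<Rightarrow> real) \<Rightarrow> (nat \<Rightarrow> real) \<Rightarrow> real mat" where
  "Rmat n a b c = mat (n + 2) (n + 2) (\<lambda>(k, s).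
     (1 / DJ n a b c) *
     (if k \<le> s then (\<Prod>j\<in>{k..<s}. a j) * PhiJ a b c k * PsiJ n a b c s
      else (\<Prod>j\<in>{s..<k}. c j) * PhiJ a b c s * PsiJ n a b c k))"

end

theory Submission
  imports Defs
begin

definition sep :: "(nat \<Rightarrow> nat) \<Rightarrow> bool" where
  "sep \<alpha> = (\<forall>i j. \<alpha> i = 1 \<and> \<alpha> j = 1 \<and> i < j \<longrightarrow> j - i \<ge> 2)"

definition Fs :: "nat \<Rightarrow> (nat \<Rightarrow> nat) set" where
  "Fs k = {\<alpha>\<in>bin_vecs k. \<alpha> k = 0 \<and> sep \<alpha>}"

lemma Fs_mem: "\<alpha> \<in> Fs k \<longleftrightarrow> (\<forall>j. \<alpha> j \<in> {0,1}) \<and> (\<forall>j. j \<notin> {1..k} \<longrightarrow> \<alpha> j = 0) \<and> \<alpha> k = 0 \<and> sep \<alpha>"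
  unfolding Fs_def bin_vecs_def by auto

lemma Fs0: "Fs 0 = {\<lambda>_. 0}"
  unfolding Fs_mem set_eq_iff sep_def by auto

lemma Fs1: "Fs 1 = {\<lambda>_. 0}"
proof -
  have "\<alpha> \<in> Fs 1 \<longleftrightarrow> \<alpha> = (\<lambda>_. 0)" for \<alpha>
  proof
    assume "\<alpha> \<in> Fs 1"
    then have "\<forall>j. \<alpha> j = 0" unfolding Fs_mem by (metis atLeastAtMost_singleton singletonD)
    then show "\<alpha> = (\<lambda>_. 0)" by auto
  qed (auto simp: Fs_mem sep_def)
  then show ?thesis by auto
qed

lemma Fs_rec: "Fs (Suc (Suc k)) = Fs (Suc k) \<union> (\<lambda>\<alpha>. \<alpha>(Suc k := 1)) ` Fs k"
proof (rule Set.set_eqI, rule HOL.iffI)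
  fix \<alpha> assume a: "\<alpha> \<in> Fs (Suc (Suc k))"
  show "\<alpha> \<in> Fs (Suc k) \<union> (\<lambda>\<alpha>. \<alpha>(Suc k := 1)) ` Fs k"
  proof (cases "\<alpha> (Suc k) = 0")
    case True
    then have "\<alpha> \<in> Fs (Suc k)" using a unfolding Fs_mem
      by (metis atLeastAtMost_iff le_Suc_eq)
    then show ?thesis by auto
  next
    case False
    then have 1: "\<alpha> (Suc k) = 1" using a unfolding Fs_mem by (metis empty_iff insert_iff)
    have k0: "\<alpha> k = 0"
    proof (cases k)
      case 0 then show ?thesis using a unfolding Fs_mem by auto
    next
      case (Suc k')
      show ?thesis
      proof (rule ccontr)
        assume "\<alpha> k \<noteq> 0"
        then have "\<alpha> k = 1" using a unfolding Fs_mem by (metis empty_iff insert_iff)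
        have "sep \<alpha>" using a Fs_mem by blast
        then have "Suc k - k \<ge> 2" using \<open>\<alpha> k = 1\<close> 1 unfolding sep_def by blast
        then show False by simp
      qed
    qed
    have "\<alpha>(Suc k := 0) \<in> Fs k" using a k0 unfolding Fs_mem sep_def
      apply (auto simp: le_Suc_eq)
      done
    moreover have "\<alpha> = (\<alpha>(Suc k := 0))(Suc k := 1)" using 1 by auto
    ultimately show ?thesis by blast
  qed
next
  fix \<alpha> assume "\<alpha> \<in> Fs (Suc k) \<union> (\<lambda>\<alpha>. \<alpha>(Suc k := 1)) ` Fs k"
  then show "\<alpha> \<in> Fs (Suc (Suc k))"
  proof
    assume "\<alpha> \<in> Fs (Suc k)" then show ?thesis unfolding Fs_mem by auto
  next
    assume "\<alpha> \<in> (\<lambda>\<alpha>. \<alpha>(Suc k := 1)) ` Fs k"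
    then obtain \<beta> where b: "\<beta> \<in> Fs k" and e: "\<alpha> = \<beta>(Suc k := 1)" by auto
    have "\<beta> j = 0" if "j \<ge> k" for j using b that unfolding Fs_mem
      by (metis atLeastAtMost_iff le_antisym)
    have s: "sep \<beta>" using b Fs_mem by blast
    have "sep \<alpha>" unfolding sep_def
    proof (intro allI impI)
      fix i j assume h: "\<alpha> i = 1 \<and> \<alpha> j = 1 \<and> i < j"
      show "j - i \<ge> 2"
      proof (cases "j = Suc k")
        case True
        then have "i \<noteq> Suc k" using h by simp
        then have "\<beta> i = 1" using h e by simp
        then have "i < k" using \<open>\<And>j. j \<ge> k \<Longrightarrow> \<beta> j = 0\<close> by (metis not_le zero_neq_one)
        then show ?thesis using True by simp
      next
        case False
        have "i \<noteq> Suc k"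
        proof
          assume "i = Suc k"
          then have "\<beta> j = 1" using h e False by simp
          then show False using \<open>\<And>j. j \<ge> k \<Longrightarrow> \<beta> j = 0\<close> h \<open>i = Suc k\<close> by simp
        qed
        then show ?thesis using s h e False unfolding sep_def by simp
      qed
    qed
    moreover have "\<forall>j. \<alpha> j \<in> {0,1}" using b e unfolding Fs_mem by simp
    moreover have "\<forall>j. j \<notin> {1..Suc (Suc k)} \<longrightarrow> \<alpha> j = 0" using b e \<open>\<And>j. j \<ge> k \<Longrightarrow> \<beta> j = 0\<close> unfolding Fs_mem by (auto simp: not_le)
    moreover have "\<alpha> (Suc (Suc k)) = 0" using b e unfolding Fs_mem by simp
    ultimately show ?thesis unfolding Fs_mem by blast
  qed
qed


lemma Fs_supp: "\<alpha> \<in> Fs k \<Longrightarrow> j \<notin> {1..k} \<Longrightarrow> \<alpha> j = 0"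
  unfolding Fs_mem by blast

lemma Fs_supp2: "\<alpha> \<in> Fs k \<Longrightarrow> j \<ge> k \<Longrightarrow> \<alpha> j = 0"
  unfolding Fs_mem by (metis atLeastAtMost_iff le_antisym)

lemma Fs_01: "\<alpha> \<in> Fs k \<Longrightarrow> \<alpha> j = 0 \<or> \<alpha> j = 1"
  unfolding Fs_mem by blast

lemma Fs_finite2: "finite (Fs k) \<and> finite (Fs (Suc k))"
proof (induction k)
  case 0 then show ?case by (simp add: Fs0 Fs1[unfolded One_nat_def])
next
  case (Suc k) then show ?case by (simp add: Fs_rec)
qed

lemma Fs_finite: "finite (Fs k)" using Fs_finite2 by blast

definition wt :: "nat \<Rightarrow> (nat \<Rightarrow> real) \<Rightarrow> (nat \<Rightarrow> real) \<Rightarrow> (nat \<Rightarrow> nat) \<Rightarrow> real" where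
  "wt k x y \<alpha> = (-1) ^ (\<Sum>j\<in>{1..k}. \<alpha> j) * vpow k x (bar k \<alpha>) * vpow k y \<alpha>"

definition SS :: "(nat \<Rightarrow> real) \<Rightarrow> (nat \<Rightarrow> real) \<Rightarrow> nat \<Rightarrow> real" where
  "SS x y k = (\<Sum>\<alpha>\<in>Fs k. wt k x y \<alpha>)"

lemma wtA:
  assumes "\<alpha> \<in> Fs (Suc k)"
  shows "wt (Suc (Suc k)) x y \<alpha> = x (Suc (Suc k)) * wt (Suc k) x y \<alpha>"
proof -
  have z1: "\<alpha> (Suc k) = 0" and z2: "\<alpha> (Suc (Suc k)) = 0" using assms Fs_supp2 by auto
  have bb: "bar (Suc (Suc k)) \<alpha> j = bar (Suc k) \<alpha> j" if "j \<in> {1..Suc k}" for j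
    using that unfolding bar_def by auto
  have b2: "bar (Suc (Suc k)) \<alpha> (Suc (Suc k)) = 1" using z1 z2 unfolding bar_def by auto
  have "vpow (Suc (Suc k)) x (bar (Suc (Suc k)) \<alpha>) = vpow (Suc k) x (bar (Suc k) \<alpha>) * x (Suc (Suc k))"
  proof -
    have "(\<Prod>j\<in>{1..Suc k}. x j ^ bar (Suc (Suc k)) \<alpha> j) = (\<Prod>j\<in>{1..Suc k}. x j ^ bar (Suc k) \<alpha> j)"
      using bb by (intro prod.cong) auto
    then show ?thesis unfolding vpow_def using b2 by (simp add: prod.cl_ivl_Suc del: One_nat_def)
  qed
  moreover have "vpow (Suc (Suc k)) y \<alpha> = vpow (Suc k) y \<alpha>"
    unfolding vpow_def using z2 by (simp add: prod.cl_ivl_Suc)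
  moreover have "(\<Sum>j\<in>{1..Suc (Suc k)}. \<alpha> j) = (\<Sum>j\<in>{1..Suc k}. \<alpha> j)"
    using z2 by (simp add: sum.cl_ivl_Suc)
  ultimately show ?thesis unfolding wt_def by simp
qed

lemma wtB:
  assumes "\<alpha> \<in> Fs k"
  shows "wt (Suc (Suc k)) x y (\<alpha>(Suc k := 1)) = - y (Suc k) * wt k x y \<alpha>"
proof -
  let ?b = "\<alpha>(Suc k := 1)"
  have z1: "\<alpha> (Suc k) = 0" and z2: "\<alpha> (Suc (Suc k)) = 0" and z0: "\<alpha> k = 0"
    using assms Fs_supp2 by auto
  have bb: "bar (Suc (Suc k)) ?b j = bar k \<alpha> j" if "j \<in> {1..k}" for j
    using that unfolding bar_def by auto
  have b1: "bar (Suc (Suc k)) ?b (Suc k) = 0" unfolding bar_def by auto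
  have b2: "bar (Suc (Suc k)) ?b (Suc (Suc k)) = 0" unfolding bar_def by auto
  have "vpow (Suc (Suc k)) x (bar (Suc (Suc k)) ?b) = vpow k x (bar k \<alpha>)"
  proof -
    have "(\<Prod>j\<in>{1..k}. x j ^ bar (Suc (Suc k)) ?b j) = (\<Prod>j\<in>{1..k}. x j ^ bar k \<alpha> j)"
      using bb by (intro prod.cong) auto
    then show ?thesis unfolding vpow_def using b1 b2 by (simp add: prod.cl_ivl_Suc del: One_nat_def)
  qed
  moreover have "vpow (Suc (Suc k)) y ?b = vpow k y \<alpha> * y (Suc k)"
  proof -
    have "(\<Prod>j\<in>{1..k}. y j ^ ?b j) = (\<Prod>j\<in>{1..k}. y j ^ \<alpha> j)"
      by (rule prod.cong) auto
    then show ?thesis unfolding vpow_def using z2 by (simp add: prod.cl_ivl_Suc)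
  qed
  moreover have "(\<Sum>j\<in>{1..Suc (Suc k)}. ?b j) = (\<Sum>j\<in>{1..k}. \<alpha> j) + 1"
  proof -
    have "(\<Sum>j\<in>{1..k}. ?b j) = (\<Sum>j\<in>{1..k}. \<alpha> j)"
      by (rule sum.cong) auto
    then show ?thesis using z2 by (simp add: sum.cl_ivl_Suc)
  qed
  ultimately show ?thesis unfolding wt_def by simp
qed

lemma SS0: "SS x y 0 = 1"
  unfolding SS_def Fs0 wt_def vpow_def by simp

lemma SS1: "SS x y 1 = x 1"
  unfolding SS_def Fs1 wt_def vpow_def bar_def by simp

lemma SS_rec: "SS x y (Suc (Suc k)) = x (Suc (Suc k)) * SS x y (Suc k) - y (Suc k) * SS x y k"
proof -
  have inj: "inj_on (\<lambda>\<alpha>. \<alpha>(Suc k := 1)) (Fs k)"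
  proof (rule inj_onI)
    fix u v assume "u \<in> Fs k" "v \<in> Fs k" "u(Suc k := 1) = v(Suc k := 1)"
    then show "u = v" using Fs_supp2[of u k "Suc k"] Fs_supp2[of v k "Suc k"]
      by (metis fun_upd_idem_iff fun_upd_upd le_SucI order_refl)
  qed
  have disj: "Fs (Suc k) \<inter> (\<lambda>\<alpha>. \<alpha>(Suc k := 1)) ` Fs k = {}"
  proof -
    { fix \<beta> assume "\<beta> \<in> Fs k" "\<beta>(Suc k := 1) \<in> Fs (Suc k)"
      then have "(\<beta>(Suc k := 1)) (Suc k) = 0" using Fs_supp2 by blast
      then have False by simp }
    then show ?thesis by blast
  qed
  have "SS x y (Suc (Suc k)) = (\<Sum>\<alpha>\<in>Fs (Suc k). wt (Suc (Suc k)) x y \<alpha>)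
      + (\<Sum>\<alpha>\<in>(\<lambda>\<alpha>. \<alpha>(Suc k := 1)) ` Fs k. wt (Suc (Suc k)) x y \<alpha>)"
    unfolding SS_def Fs_rec by (rule sum.union_disjoint[OF Fs_finite finite_imageI[OF Fs_finite] disj])
  also have "(\<Sum>\<alpha>\<in>Fs (Suc k). wt (Suc (Suc k)) x y \<alpha>) = x (Suc (Suc k)) * SS x y (Suc k)"
    unfolding SS_def sum_distrib_left by (rule sum.cong) (auto simp: wtA)
  also have "(\<Sum>\<alpha>\<in>(\<lambda>\<alpha>. \<alpha>(Suc k := 1)) ` Fs k. wt (Suc (Suc k)) x y \<alpha>) = - y (Suc k) * SS x y k"
    unfolding SS_def sum.reindex[OF inj] sum_distrib_left by (rule sum.cong) (auto simp: wtB[unfolded One_nat_def])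
  finally show ?thesis by simp
qed


definition wsum :: "nat \<Rightarrow> (nat \<Rightarrow> nat) \<Rightarrow> nat" where
  "wsum k \<alpha> = (\<Sum>j\<in>{1..k}. \<alpha> j)"

lemma wsum_bound2: "(\<forall>\<alpha>\<in>Fs k. wsum k \<alpha> \<le> k div 2) \<and> (\<forall>\<alpha>\<in>Fs (Suc k). wsum (Suc k) \<alpha> \<le> Suc k div 2)"
proof (induction k)
  case 0 then show ?case by (simp add: Fs0 Fs1[unfolded One_nat_def] wsum_def)
next
  case (Suc k)
  have "wsum (Suc (Suc k)) \<alpha> \<le> Suc (Suc k) div 2" if a: "\<alpha> \<in> Fs (Suc (Suc k))" for \<alpha>
  proof -
    from a[unfolded Fs_rec] show ?thesis
    proof
      assume b: "\<alpha> \<in> Fs (Suc k)"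
      then have "\<alpha> (Suc (Suc k)) = 0" using Fs_supp2 by auto
      then have "wsum (Suc (Suc k)) \<alpha> = wsum (Suc k) \<alpha>" unfolding wsum_def by (simp add: sum.cl_ivl_Suc)
      moreover have "Suc k div 2 \<le> Suc (Suc k) div 2" by (rule div_le_mono) simp
      ultimately show ?thesis using Suc b by (metis order_trans)
    next
      assume "\<alpha> \<in> (\<lambda>\<alpha>. \<alpha>(Suc k := 1)) ` Fs k"
      then obtain \<beta> where b: "\<beta> \<in> Fs k" and e: "\<alpha> = \<beta>(Suc k := 1)" by auto
      have "(\<Sum>j\<in>{1..k}. \<alpha> j) = (\<Sum>j\<in>{1..k}. \<beta> j)" unfolding e by (rule sum.cong) auto
      moreover have "\<alpha> (Suc (Suc k)) = 0" using Fs_supp2[OF b] e by auto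
      ultimately have "wsum (Suc (Suc k)) \<alpha> = wsum k \<beta> + 1" unfolding wsum_def using e by (simp add: sum.cl_ivl_Suc)
      then show ?thesis using Suc b by simp
    qed
  qed
  then show ?case using Suc by blast
qed

lemma wsum_bound: "\<alpha> \<in> Fs k \<Longrightarrow> wsum k \<alpha> \<le> k div 2"
  using wsum_bound2 by blast

lemma Fs_zero: "\<alpha> \<in> Fs k \<Longrightarrow> wsum k \<alpha> = 0 \<Longrightarrow> \<alpha> = (\<lambda>_. 0)"
proof
  fix j assume a: "\<alpha> \<in> Fs k" and w: "wsum k \<alpha> = 0"
  show "\<alpha> j = 0"
  proof (cases "j \<in> {1..k}")
    case True
    then show ?thesis using w unfolding wsum_def by simp
  next
    case False then show ?thesis using Fs_supp[OF a] by blast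
  qed
qed

lemma zero_Fs: "(\<lambda>_. 0) \<in> Fs k"
  unfolding Fs_mem sep_def by auto

lemma ell_eq: "ell k m = {\<alpha>\<in>Fs k. wsum k \<alpha> = m}"
proof (cases "m = 0")
  case True
  then show ?thesis unfolding ell_def using Fs_zero zero_Fs by (auto simp: wsum_def)
next
  case False
  then show ?thesis unfolding ell_def Fs_def wsum_def sep_def by auto
qed

lemma chebP_SS: "chebP x y (int k) = SS x y k"
proof (cases "k = 0")
  case True then show ?thesis by (simp add: chebP_def SS0)
next
  case False
  have "SS x y k = (\<Sum>m\<in>{0..k div 2}. \<Sum>\<alpha>\<in>{\<alpha>\<in>Fs k. wsum k \<alpha> = m}. wt k x y \<alpha>)"
    unfolding SS_def by (rule sum.group[symmetric]) (auto simp: Fs_finite wsum_bound)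
  also have "\<dots> = (\<Sum>m\<in>{0..k div 2}. (-1) ^ m *
        (\<Sum>\<alpha>\<in>ell k m. vpow k x (bar k \<alpha>) * vpow k y \<alpha>))"
    unfolding ell_eq sum_distrib_left
    by (intro sum.cong refl) (auto simp: wt_def wsum_def)
  finally show ?thesis using False by (simp add: chebP_def)
qed


fun Dt :: "(nat \<Rightarrow> real) \<Rightarrow> (nat \<Rightarrow> real) \<Rightarrow> nat \<Rightarrow> real" where
  "Dt x y 0 = 1"
| "Dt x y (Suc 0) = x 0"
| "Dt x y (Suc (Suc m)) = x (Suc m) * Dt x y (Suc m) - y m * Dt x y m"

lemma shift_shift[simp]: "shift m (shift k x) = shift (m + k) x"
  unfolding shift_def by (auto simp: add.assoc)

lemma shift_app: "shift k x j = x (j + k)"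
  unfolding shift_def by simp

lemma Dt_first: "Dt x y (Suc (Suc m)) = x 0 * Dt (shift 1 x) (shift 1 y) (Suc m) - y 0 * Dt (shift 2 x) (shift 2 y) m"
proof (induction m arbitrary: x y rule: less_induct)
  case (less m)
  show ?case
  proof (cases m)
    case 0 then show ?thesis by (simp add: algebra_simps shift_app)
  next
    case (Suc m1)
    show ?thesis
    proof (cases m1)
      case 0 then show ?thesis using Suc by (simp add: algebra_simps shift_app)
    next
      case (Suc m2)
      have h1: "Dt x y (Suc (Suc m1)) = x 0 * Dt (shift 1 x) (shift 1 y) (Suc m1) - y 0 * Dt (shift 2 x) (shift 2 y) m1"
        by (rule less.IH) (simp add: \<open>m = Suc m1\<close>)
      have h2: "Dt x y (Suc (Suc m2)) = x 0 * Dt (shift 1 x) (shift 1 y) (Suc m2) - y 0 * Dt (shift 2 x) (shift 2 y) m2"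
        by (rule less.IH) (simp add: \<open>m = Suc m1\<close> Suc)
      have "Dt x y (Suc (Suc m)) = x (Suc m) * Dt x y (Suc m) - y m * Dt x y m" by simp
      also have "\<dots> = x (Suc m) * (x 0 * Dt (shift 1 x) (shift 1 y) (Suc m1) - y 0 * Dt (shift 2 x) (shift 2 y) m1)
          - y m * (x 0 * Dt (shift 1 x) (shift 1 y) (Suc m2) - y 0 * Dt (shift 2 x) (shift 2 y) m2)"
        using h1 h2 \<open>m = Suc m1\<close> Suc by simp
      also have "\<dots> = x 0 * Dt (shift 1 x) (shift 1 y) (Suc m) - y 0 * Dt (shift 2 x) (shift 2 y) m"
        using \<open>m = Suc m1\<close> Suc by (simp add: algebra_simps shift_app)
      finally show ?thesis using \<open>m = Suc m1\<close> by simp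
    qed
  qed
qed

lemma SS_Dt2: "SS x y k = Dt (shift 1 x) (shift 1 y) k \<and> SS x y (Suc k) = Dt (shift 1 x) (shift 1 y) (Suc k)"
proof (induction k)
  case 0 then show ?case by (simp add: SS0 SS1[unfolded One_nat_def] shift_app)
next
  case (Suc k) then show ?case by (simp add: SS_rec shift_app)
qed

lemma chebP_Dt: "chebP x y i = (if i < 0 then 0 else Dt (shift 1 x) (shift 1 y) (nat i))"
proof (cases "i < 0")
  case True then show ?thesis unfolding chebP_def by auto
next
  case False
  then have "i = int (nat i)" by simp
  then have "chebP x y i = SS x y (nat i)" using chebP_SS by metis
  then show ?thesis using SS_Dt2 False by simp
qed


lemma nat_1_int[simp]: "nat (1 + int p) = Suc p" by simp

lemma pmul0: "pmul a c j = a j * c j" unfolding pmul_def by simp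

lemma PhiJ_Dt: "PhiJ a b c k = Dt b (pmul a c) k"
proof (cases k)
  case 0 then show ?thesis by (simp add: PhiJ_def)
next
  case (Suc m)
  show ?thesis
  proof (cases m)
    case 0 then show ?thesis using Suc by (simp add: PhiJ_def chebP_Dt)
  next
    case (Suc p)
    have e1: "int k - 1 = int (Suc p)" and e2: "int k - 2 = int p" using Suc \<open>k = Suc m\<close> by auto
    show ?thesis unfolding PhiJ_def e1 e2 chebP_Dt using Suc \<open>k = Suc m\<close>
      by (simp add: Dt_first[of b] pmul0 numeral_2_eq_2 del: Dt.simps(3))
  qed
qed

lemma PsiJ_Dt: assumes "k \<le> n + 1"
  shows "PsiJ n a b c k = Dt (shift (k+1) b) (shift (k+1) (pmul a c)) (n + 1 - k)"
proof (cases "k = n + 1")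
  case True then show ?thesis by (simp add: PsiJ_def)
next
  case False
  then obtain d where d: "n = k + d" using assms by (metis le_add_diff_inverse le_neq_implies_less less_Suc_eq_le add.commute Suc_eq_plus1)
  show ?thesis
  proof (cases d)
    case 0 then show ?thesis using d by (simp add: PsiJ_def chebP_Dt shift_app)
  next
    case (Suc d')
    have e1: "int n - int k = int (Suc d')" and e2: "int n - int k - 1 = int d'" using Suc d by auto
    have "n + 1 - k = Suc (Suc d')" using Suc d by simp
    then show ?thesis unfolding PsiJ_def e1 e2 chebP_Dt using Suc d False
      by (simp add: shift_app pmul0 algebra_simps)
  qed
qed

lemma DJ_Dt: assumes "n \<ge> 1" shows "DJ n a b c = Dt b (pmul a c) (n + 2)"
proof -
  obtain p where p: "n = Suc p" using assms by (cases n) auto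
  have A: "b (n + 1) * chebP b (pmul a c) (int n) - a n * c n * chebP b (pmul a c) (int n - 1)
     = Dt (shift 1 b) (shift 1 (pmul a c)) (Suc n)"
  proof -
    have e: "int n - 1 = int p" using p by simp
    show ?thesis unfolding e chebP_Dt using p by (simp add: shift_app pmul0 algebra_simps)
  qed
  have B: "b (n + 1) * chebP (shift 1 b) (shift 1 (pmul a c)) (int n - 1)
        - a n * c n * chebP (shift 1 b) (shift 1 (pmul a c)) (int n - 2)
     = Dt (shift 2 b) (shift 2 (pmul a c)) n"
  proof (cases p)
    case 0
    have e: "int n - 1 = 0" "int n - 2 = -1" using p 0 by auto
    show ?thesis unfolding e chebP_Dt using p 0 by (simp add: shift_app)
  next
    case (Suc q)
    have e: "int n - 1 = int (Suc q)" "int n - 2 = int q" using p Suc by auto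
    show ?thesis unfolding e chebP_Dt using p Suc by (simp add: shift_app pmul0 algebra_simps numeral_2_eq_2)
  qed
  show ?thesis unfolding DJ_def A B using Dt_first[of b "pmul a c" n] by (simp add: pmul0)
qed


definition TM :: "nat \<Rightarrow> (nat \<Rightarrow> real) \<Rightarrow> (nat \<Rightarrow> real) \<Rightarrow> (nat \<Rightarrow> real) \<Rightarrow> real mat" where
  "TM m a b c = mat m m (\<lambda>(i, j).
     if i = j then b i else if j = i + 1 then - a i else if i = j + 1 then - c j else 0)"

lemma Jmat_TM: "Jmat n a b c = TM (n + 2) a b c"
  unfolding Jmat_def TM_def by simp

lemma TM_carrier: "TM m a b c \<in> carrier_mat m m" unfolding TM_def by simp

lemma det_TM: "det (TM m a b c) = Dt b (pmul a c) m"
proof (induction m rule: less_induct)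
  case (less m)
  show ?case
  proof (cases m)
    case 0 then show ?thesis using det_dim_zero[OF TM_carrier[of 0 a b c]] by simp
  next
    case (Suc m1)
    show ?thesis
    proof (cases m1)
      case 0
      then show ?thesis using Suc det_single[OF TM_carrier[of 1 a b c]] by (simp add: TM_def)
    next
      case (Suc k)
      let ?A = "TM (Suc (Suc k)) a b c"
      have mS: "m = Suc (Suc k)" using Suc \<open>m = Suc m1\<close> by simp
      let ?f = "\<lambda>i. ?A $$ (i, Suc k) * cofactor ?A i (Suc k)"
      have "det ?A = (\<Sum>i<Suc (Suc k). ?f i)"
        by (rule laplace_expansion_column[OF TM_carrier]) simp
      also have "\<dots> = (\<Sum>i<k. ?f i) + ?f k + ?f (Suc k)" by simp
      also have "(\<Sum>i<k. ?f i) = 0"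
        by (rule sum.neutral) (auto simp: TM_def)
      finally have d1: "det ?A = ?f k + ?f (Suc k)" by simp
      have del1: "mat_delete ?A (Suc k) (Suc k) = TM (Suc k) a b c"
        by (rule eq_matI) (auto simp: mat_delete_def TM_def)
      define M where "M = mat_delete ?A k (Suc k)"
      have Mc: "M \<in> carrier_mat (Suc k) (Suc k)" unfolding M_def mat_delete_def TM_def by simp
      let ?g = "\<lambda>j. M $$ (k, j) * cofactor M k j"
      have "det M = (\<Sum>j<Suc k. ?g j)"
        by (rule laplace_expansion_row[OF Mc]) simp
      also have "\<dots> = (\<Sum>j<k. ?g j) + ?g k" by simp
      also have "(\<Sum>j<k. ?g j) = 0"
        by (rule sum.neutral) (auto simp: M_def mat_delete_def TM_def)
      finally have d2: "det M = ?g k" by simp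
      have del2: "mat_delete M k k = TM k a b c"
        by (rule eq_matI) (auto simp: M_def mat_delete_def TM_def)
      have Mkk: "M $$ (k, k) = - c k" by (simp add: M_def mat_delete_def TM_def)
      have detM: "det M = - c k * det (TM k a b c)"
        using d2 del2 Mkk by (simp add: cofactor_def)
      have "det ?A = - a k * ((-1) ^ (k + Suc k) * det M) + b (Suc k) * det (TM (Suc k) a b c)"
        using d1 del1 unfolding cofactor_def M_def by (simp add: TM_def)
      also have "\<dots> = b (Suc k) * det (TM (Suc k) a b c) - a k * c k * det (TM k a b c)"
        using detM by simp
      also have "\<dots> = Dt b (pmul a c) m"
      proof -
        have "det (TM (Suc k) a b c) = Dt b (pmul a c) (Suc k)" by (rule less.IH) (simp add: mS)
        moreover have "det (TM k a b c) = Dt b (pmul a c) k" by (rule less.IH) (simp add: mS)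
        ultimately show ?thesis using mS by (simp add: pmul_def)
      qed
      finally show ?thesis using mS by simp
    qed
  qed
qed


definition psi :: "nat \<Rightarrow> (nat \<Rightarrow> real) \<Rightarrow> (nat \<Rightarrow> real) \<Rightarrow> nat \<Rightarrow> real" where
  "psi n b y k = Dt (shift (Suc k) b) (shift (Suc k) y) (n + 1 - k)"

lemma psi_last: "psi n b y (Suc n) = 1" unfolding psi_def by simp

lemma psi_n: "psi n b y n = b (Suc n)" unfolding psi_def by (simp add: shift_app)

lemma psi_rec: assumes "1 \<le> i" "i \<le> n"
  shows "psi n b y (i - 1) = b i * psi n b y i - y i * psi n b y (Suc i)"
proof -
  have e: "n + 1 - (i - 1) = Suc (Suc (n - i))" using assms by simp
  have "psi n b y (i - 1) = Dt (shift i b) (shift i y) (Suc (Suc (n - i)))"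
    unfolding psi_def e using assms by simp
  also have "\<dots> = b i * Dt (shift (Suc i) b) (shift (Suc i) y) (Suc (n - i))
      - y i * Dt (shift (Suc (Suc i)) b) (shift (Suc (Suc i)) y) (n - i)"
    by (subst Dt_first) (simp add: shift_app numeral_2_eq_2)
  also have "\<dots> = b i * psi n b y i - y i * psi n b y (Suc i)"
    unfolding psi_def using assms by (simp add: Suc_diff_le)
  finally show ?thesis .
qed

lemma psi0: "psi n b y 0 = Dt (shift 1 b) (shift 1 y) (Suc n)" unfolding psi_def by simp
lemma psi1: "psi n b y 1 = Dt (shift 2 b) (shift 2 y) n" unfolding psi_def by (simp add: numeral_2_eq_2)

lemma wronski: "i \<le> n \<Longrightarrow> Dt b y (Suc i) * psi n b y i - y i * Dt b y i * psi n b y (Suc i) = Dt b y (n + 2)"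
proof (induction i)
  case 0
  show ?case unfolding psi_def using Dt_first[of b y n] by (simp add: numeral_2_eq_2)
next
  case (Suc i)
  have r: "psi n b y i = b (Suc i) * psi n b y (Suc i) - y (Suc i) * psi n b y (Suc (Suc i))"
    using psi_rec[of "Suc i" n b y] Suc.prems by simp
  have "Dt b y (Suc (Suc i)) * psi n b y (Suc i) - y (Suc i) * Dt b y (Suc i) * psi n b y (Suc (Suc i))
      = Dt b y (Suc i) * psi n b y i - y i * Dt b y i * psi n b y (Suc i)"
    unfolding r by (simp add: algebra_simps)
  then show ?case using Suc by simp
qed


lemma row_sum:
  fixes g :: "nat \<Rightarrow> real"
  assumes "i < N"
  shows "(\<Sum>j<N. (if i = j then b i else if j = i + 1 then - a i else if i = j + 1 then - c j else 0) * g j)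
    = b i * g i - (if Suc i < N then a i * g (Suc i) else 0) - (if 1 \<le> i then c (i - 1) * g (i - 1) else 0)"
proof -
  have e: "(if i = j then b i else if j = i + 1 then - a i else if i = j + 1 then - c j else 0) * g j
     = (if j = i then b i * g j else 0) + (if j = Suc i then - a i * g j else 0)
       + (if j = i - 1 \<and> 1 \<le> i then - c j * g j else 0)" for j
    by auto
  have s3: "(\<Sum>j<N. if j = i - 1 \<and> 1 \<le> i then - c j * g j else 0) = (if 1 \<le> i then - c (i - 1) * g (i - 1) else 0)"
  proof (cases "1 \<le> i")
    case True
    then have "(\<Sum>j<N. if j = i - 1 \<and> 1 \<le> i then - c j * g j else 0) = (\<Sum>j<N. if j = i - 1 then - c j * g j else 0)"
      by simp
    also have "\<dots> = - c (i - 1) * g (i - 1)" using assms True by (subst sum.delta) auto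
    finally show ?thesis using True by simp
  qed simp
  show ?thesis unfolding e sum.distrib s3 using assms by (simp add: sum.delta)
qed

lemma entry_abstract:
  fixes \<phi> \<psi> a b c :: "nat \<Rightarrow> real" and D :: real
  assumes p0: "\<phi> 0 = 1" and p1: "\<phi> (Suc 0) = b 0"
    and prec: "\<And>i. \<phi> (Suc (Suc i)) = b (Suc i) * \<phi> (Suc i) - a i * c i * \<phi> i"
    and qlast: "\<psi> (Suc n) = 1" and qn: "\<psi> n = b (Suc n)"
    and qrec: "\<And>i. 1 \<le> i \<Longrightarrow> i \<le> n \<Longrightarrow> \<psi> (i - 1) = b i * \<psi> i - a i * c i * \<psi> (Suc i)"
    and W: "\<And>i. i \<le> n \<Longrightarrow> \<phi> (Suc i) * \<psi> i - a i * c i * \<phi> i * \<psi> (Suc i) = D"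
    and Dl: "D = \<phi> (n + 2)"
    and r_def: "\<And>k s. r k s = (if k \<le> s then (\<Prod>j\<in>{k..<s}. a j) * \<phi> k * \<psi> s
                     else (\<Prod>j\<in>{s..<k}. c j) * \<phi> s * \<psi> k)"
    and i: "i < n + 2" and s: "s < n + 2"
  shows "b i * r i s - (if Suc i < n + 2 then a i * r (Suc i) s else 0)
           - (if 1 \<le> i then c (i - 1) * r (i - 1) s else 0) = (if i = s then D else 0)"
proof -
  have rge: "r k s = (\<Prod>j\<in>{s..<k}. c j) * \<phi> s * \<psi> k" if "s \<le> k" for k
    using that r_def[of k s] by (cases "k = s") auto
  consider (lt) "i < s" | (gt) "s < i" | (eq) "i = s" by linarith
  then show ?thesis
  proof cases
    case lt
    let ?A = "\<lambda>k. \<Prod>j\<in>{k..<s}. a j"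
    have Ai: "?A i = a i * ?A (Suc i)" using lt by (rule prod.atLeast_Suc_lessThan)
    have r1: "r i s = ?A i * \<phi> i * \<psi> s" and r2: "r (Suc i) s = ?A (Suc i) * \<phi> (Suc i) * \<psi> s"
      using lt r_def by auto
    have si: "Suc i < n + 2" using lt s by simp
    show ?thesis
    proof (cases i)
      case 0 then show ?thesis using r1 r2 si lt Ai p0 p1 by simp
    next
      case (Suc i')
      have Ai': "?A i' = a i' * ?A i" using lt Suc prod.atLeast_Suc_lessThan[of i' s a] by simp
      have r0: "r i' s = ?A i' * \<phi> i' * \<psi> s" using lt Suc r_def by auto
      have q: "\<phi> (Suc i) = b i * \<phi> i - a i' * c i' * \<phi> i'" using prec[of i'] Suc by simp
      have "b i * r i s - a i * r (Suc i) s - c i' * r i' s = 0"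
        unfolding r0 r1 r2 Ai' Ai q by (simp add: algebra_simps)
      then show ?thesis using si lt Suc by simp
    qed
  next
    case gt
    then obtain i' where ii: "i = Suc i'" and si': "s \<le> i'" by (cases i) auto
    let ?C = "\<lambda>k. \<Prod>j\<in>{s..<k}. c j"
    have Ci: "?C i = ?C i' * c i'" unfolding ii using si' by (rule prod.atLeastLessThan_Suc)
    have r1: "r i s = ?C i * \<phi> s * \<psi> i" using gt by (intro rge) simp
    have r0: "r i' s = ?C i' * \<phi> s * \<psi> i'" using si' by (intro rge)
    show ?thesis
    proof (cases "Suc i < n + 2")
      case True
      have Ci2: "?C (Suc i) = ?C i * c i" using gt by (intro prod.atLeastLessThan_Suc) simp
      have r2: "r (Suc i) s = ?C (Suc i) * \<phi> s * \<psi> (Suc i)" using gt by (intro rge) simp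
      have q: "\<psi> i' = b i * \<psi> i - a i * c i * \<psi> (Suc i)" using qrec[of i] True ii by simp
      have "b i * r i s - a i * r (Suc i) s - c i' * r i' s = 0"
        unfolding r0 r1 r2 Ci2 Ci q by (simp add: algebra_simps)
      then show ?thesis using True gt ii by simp
    next
      case False
      then have "i = Suc n" using i by simp
      then have "i' = n" using ii by simp
      then show ?thesis using r0 r1 Ci False ii gt qlast qn \<open>i = Suc n\<close> by (simp add: algebra_simps)
    qed
  next
    case eq
    have r1: "r i i = \<phi> i * \<psi> i" using r_def by simp
    show ?thesis
    proof (cases "Suc i < n + 2")
      case True
      have r2: "r (Suc i) i = c i * \<phi> i * \<psi> (Suc i)" using r_def by simp
      show ?thesis
      proof (cases i)
        case 0
        then show ?thesis using W[of 0] r1 r2 eq p0 p1 True by (simp add: algebra_simps)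
      next
        case (Suc i')
        have r0: "r i' i = a i' * \<phi> i' * \<psi> i" using r_def Suc by simp
        have q: "\<phi> (Suc i) = b i * \<phi> i - a i' * c i' * \<phi> i'" using prec[of i'] Suc by simp
        have "i \<le> n" using True by simp
        have "b i * r i i - a i * r (Suc i) i - c i' * r i' i = \<phi> (Suc i) * \<psi> i - a i * c i * \<phi> i * \<psi> (Suc i)"
          unfolding r0 r1 r2 q by (simp add: algebra_simps)
        also have "\<dots> = D" using W[OF \<open>i \<le> n\<close>] .
        finally have X: "b i * r i i - a i * r (Suc i) i - c i' * r i' i = D" .
        have i1: "i - 1 = i'" "1 \<le> i" using Suc by simp_all
        show ?thesis unfolding eq[symmetric] using X True by (simp only: i1 if_True refl)
      qed
    next
      case False
      then have iS: "i = Suc n" using i by simp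
      have r1': "r (Suc n) (Suc n) = \<phi> (Suc n)" using r_def qlast by simp
      have r0': "r n (Suc n) = a n * \<phi> n" using r_def qlast by simp
      have Df: "D = b (Suc n) * \<phi> (Suc n) - a n * c n * \<phi> n" using Dl prec[of n] by (simp add: numeral_2_eq_2)
      have X: "b (Suc n) * r (Suc n) (Suc n) - c n * r n (Suc n) = D"
        unfolding r1' r0' Df by (simp add: algebra_simps)
      show ?thesis unfolding eq[symmetric] iS using X by simp
    qed
  qed
qed


theorem theorem4p3:
  fixes n :: nat and a b c :: "nat \<Rightarrow> real"
  assumes "n \<ge> 1"
    and "\<forall>k\<le>n. a k \<noteq> 0"
    and "\<forall>k\<le>n. c k \<noteq> 0"
  shows "(invertible_mat (Jmat n a b c) \<longleftrightarrow> DJ n a b c \<noteq> 0) \<and>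
         (DJ n a b c \<noteq> 0 \<longrightarrow>
            Jmat n a b c * Rmat n a b c = 1\<^sub>m (n + 2) \<and>
            Rmat n a b c * Jmat n a b c = 1\<^sub>m (n + 2) \<and>
            det (Rmat n a b c) = 1 / DJ n a b c)"
proof -
  define N where "N = n + 2"
  define y where "y = pmul a c"
  define D where "D = DJ n a b c"
  define J where "J = Jmat n a b c"
  define R where "R = Rmat n a b c"
  define r where "r = (\<lambda>k s. if k \<le> s then (\<Prod>j\<in>{k..<s}. a j) * Dt b y k * psi n b y s
                     else (\<Prod>j\<in>{s..<k}. c j) * Dt b y s * psi n b y k)"
  have DD: "D = Dt b y (n + 2)" unfolding D_def y_def using DJ_Dt[OF assms(1)] by simp
  have detJ: "det J = D" unfolding J_def Jmat_TM det_TM DD y_def by simp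
  have Jc: "J \<in> carrier_mat N N" unfolding J_def Jmat_TM N_def by (rule TM_carrier)
  have Rc: "R \<in> carrier_mat N N" unfolding R_def Rmat_def N_def by simp
  have Rij: "R $$ (k, s) = 1 / D * r k s" if "k < N" "s < N" for k s
  proof -
    have "k \<le> n + 1" "s \<le> n + 1" using that N_def by auto
    then show ?thesis unfolding R_def Rmat_def r_def D_def y_def using that N_def
      by (simp add: PhiJ_Dt PsiJ_Dt psi_def)
  qed
  have Jij: "J $$ (i, j) = (if i = j then b i else if j = i + 1 then - a i else if i = j + 1 then - c j else 0)"
    if "i < N" "j < N" for i j
    unfolding J_def Jmat_def using that N_def by simp
  have main: "D \<noteq> 0 \<Longrightarrow> J * R = 1\<^sub>m N"
  proof (rule eq_matI)
    assume D0: "D \<noteq> 0"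
    fix i s assume i: "i < dim_row (1\<^sub>m N :: real mat)" and s: "s < dim_col (1\<^sub>m N :: real mat)"
    then have i: "i < N" and s: "s < N" by auto
    have "(J * R) $$ (i, s) = (\<Sum>j<N. J $$ (i, j) * R $$ (j, s))"
      using Jc Rc i s by (simp add: scalar_prod_def lessThan_atLeast0)
    also have "\<dots> = (\<Sum>j<N. (if i = j then b i else if j = i + 1 then - a i else if i = j + 1 then - c j else 0) * (1 / D * r j s))"
      by (rule sum.cong) (auto simp: Jij Rij i s)
    also have "\<dots> = 1 / D * (\<Sum>j<N. (if i = j then b i else if j = i + 1 then - a i else if i = j + 1 then - c j else 0) * r j s)"
      by (simp add: sum_distrib_left algebra_simps)
    also have "(\<Sum>j<N. (if i = j then b i else if j = i + 1 then - a i else if i = j + 1 then - c j else 0) * r j s)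
       = b i * r i s - (if Suc i < N then a i * r (Suc i) s else 0)
           - (if 1 \<le> i then c (i - 1) * r (i - 1) s else 0)"
      by (rule row_sum[OF i])
    also have "\<dots> = (if i = s then D else 0)"
      unfolding N_def
    proof (rule entry_abstract[where \<phi> = "Dt b y" and \<psi> = "psi n b y"])
      show "\<And>i. Dt b y (Suc (Suc i)) = b (Suc i) * Dt b y (Suc i) - a i * c i * Dt b y i"
        by (simp add: y_def pmul_def)
      show "psi n b y (Suc n) = 1" by (rule psi_last)
      show "psi n b y n = b (Suc n)" by (rule psi_n)
      show "\<And>i. 1 \<le> i \<Longrightarrow> i \<le> n \<Longrightarrow> psi n b y (i - 1) = b i * psi n b y i - a i * c i * psi n b y (Suc i)"
        using psi_rec by (simp add: y_def pmul_def)
      show "\<And>i. i \<le> n \<Longrightarrow> Dt b y (Suc i) * psi n b y i - a i * c i * Dt b y i * psi n b y (Suc i) = D"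
        using wronski DD by (simp add: y_def pmul_def)
      show "D = Dt b y (n + 2)" by (rule DD)
      show "\<And>k s. r k s = (if k \<le> s then (\<Prod>j\<in>{k..<s}. a j) * Dt b y k * psi n b y s
                     else (\<Prod>j\<in>{s..<k}. c j) * Dt b y s * psi n b y k)" by (simp add: r_def)
    qed (use i s N_def in auto)
    finally show "(J * R) $$ (i, s) = 1\<^sub>m N $$ (i, s)" using D0 i s by simp
  next
    show "dim_row (J * R) = dim_row (1\<^sub>m N)" "dim_col (J * R) = dim_col (1\<^sub>m N)"
      using Jc Rc by auto
  qed
  have inv_iff: "invertible_mat J \<longleftrightarrow> D \<noteq> 0"
  proof
    assume "invertible_mat J"
    then obtain B where JB: "J * B = 1\<^sub>m (dim_row J)" and BJ: "B * J = 1\<^sub>m (dim_row B)"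
      unfolding invertible_mat_def inverts_mat_def by blast
    have "dim_col B = N" using JB Jc by (metis index_mult_mat(3) index_one_mat(3) carrier_matD(1))
    moreover have "dim_row B = N" using BJ Jc by (metis index_mult_mat(3) index_one_mat(3) carrier_matD(2))
    ultimately have Bc: "B \<in> carrier_mat N N" by auto
    have "det J * det B = 1" using det_mult[OF Jc Bc] JB Jc by simp
    then show "D \<noteq> 0" using detJ by auto
  next
    assume D0: "D \<noteq> 0"
    have "R * J = 1\<^sub>m N" using mat_mult_left_right_inverse[OF Jc Rc main[OF D0]] .
    then show "invertible_mat J" unfolding invertible_mat_def inverts_mat_def square_mat.simps
      using main[OF D0] Jc Rc by (auto intro!: exI[of _ R])
  qed
  have rest: "D \<noteq> 0 \<Longrightarrow> J * R = 1\<^sub>m N \<and> R * J = 1\<^sub>m N \<and> det R = 1 / D"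
  proof -
    assume D0: "D \<noteq> 0"
    have JR: "J * R = 1\<^sub>m N" by (rule main[OF D0])
    have "det J * det R = 1" using det_mult[OF Jc Rc] JR by simp
    then have "det R = 1 / D" using detJ D0 by (simp add: field_simps)
    then show ?thesis using JR mat_mult_left_right_inverse[OF Jc Rc JR] by simp
  qed
  show ?thesis using inv_iff rest unfolding J_def R_def D_def N_def by simp
qed

end
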